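(* For any sequence of groups $(G_n)_{n\in\mathbb N}$, the archipelago group $\mathcal A(G_n)$ is torsion-free.
   Context: For a sequence of groups $(G_n)_{n\in\mathbb N}$, an infinite word is a map $w:L\to\bigsqcup_n (G_n\setminus\{1\})$ from a countable linearly ordered set $L$ such that $w^{-1}(G_n)$ is finite for every $n$. Two infinite words are equivalent if for every $m$ their restrictions to the letters from $G_1,\dots,G_m$ represent the same element of $G_1*\cdots*G_m$. The topologist's product $\circledast_n G_n$ is the group of equivalence classes, with multiplication induced by concatenation and inversion by reversing the order and inverting each letter. The free product $*_n G_n$ is the subgroup of classes of finite words. The archipelago group is $\mathcal A(G_n):=\circledast_n G_n/\langle\langle *_n G_n\rangle\rangle$ (quotient by the normal closure). *)

theory Defs
  imports "HOL-Algebra.Algebra"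
begin

text \<open>Two finite words represent the same element of the free product iff they are
  related by the equivalence relation generated by merging two adjacent letters
  from the same factor (deleting the result if it is the identity).\<close>

inductive fp_step :: "(nat \<Rightarrow> ('a, 'b) monoid_scheme) \<Rightarrow> (nat \<times> 'a) list \<Rightarrow> (nat \<times> 'a) list \<Rightarrow> bool"
  for G where
  merge: "\<lbrakk>a \<in> carrier (G n); b \<in> carrier (G n); a \<otimes>\<^bsub>G n\<^esub> b \<noteq> \<one>\<^bsub>G n\<^esub>\<rbrakk>
          \<Longrightarrow> fp_step G (xs @ [(n, a), (n, b)] @ ys) (xs @ [(n, a \<otimes>\<^bsub>G n\<^esub> b)] @ ys)"
| cancel: "\<lbrakk>a \<in> carrier (G n); b \<in> carrier (G n); a \<otimes>\<^bsub>G n\<^esub> b = \<one>\<^bsub>G n\<^esub>\<rbrakk>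
          \<Longrightarrow> fp_step G (xs @ [(n, a), (n, b)] @ ys) (xs @ ys)"

definition fp_equiv :: "(nat \<Rightarrow> ('a, 'b) monoid_scheme) \<Rightarrow> (nat \<times> 'a) list \<Rightarrow> (nat \<times> 'a) list \<Rightarrow> bool" where
  "fp_equiv G = equivclp (fp_step G)"

text \<open>An infinite word is indexed by a countable linearly ordered set; every such set
  embeds order-preservingly into the rationals, so we model an infinite word as a
  partial map from the rationals to letters (its domain being the index set).\<close>

definition is_word :: "(nat \<Rightarrow> ('a, 'b) monoid_scheme) \<Rightarrow> (rat \<Rightarrow> (nat \<times> 'a) option) \<Rightarrow> bool" where
  "is_word G w \<longleftrightarrow>
     (\<forall>q n a. w q = Some (n, a) \<longrightarrow> a \<in> carrier (G n) \<and> a \<noteq> \<one>\<^bsub>G n\<^esub>) \<and>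
     (\<forall>n. finite {q. \<exists>a. w q = Some (n, a)})"

definition restr :: "nat \<Rightarrow> (rat \<Rightarrow> (nat \<times> 'a) option) \<Rightarrow> (nat \<times> 'a) list" where
  "restr m w = map (\<lambda>q. the (w q)) (sorted_list_of_set {q. \<exists>n a. w q = Some (n, a) \<and> n \<le> m})"

definition word_equiv :: "(nat \<Rightarrow> ('a, 'b) monoid_scheme) \<Rightarrow> (rat \<Rightarrow> (nat \<times> 'a) option) \<Rightarrow> (rat \<Rightarrow> (nat \<times> 'a) option) \<Rightarrow> bool" where
  "word_equiv G u v \<longleftrightarrow> (\<forall>m. fp_equiv G (restr m u) (restr m v))"

text \<open>Order isomorphism from the open interval (-1,1) of rationals onto all rationals.\<close>
definition squeeze_inv :: "rat \<Rightarrow> rat" where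
  "squeeze_inv y = y / (1 - \<bar>y\<bar>)"

definition concat_word :: "(rat \<Rightarrow> 'c option) \<Rightarrow> (rat \<Rightarrow> 'c option) \<Rightarrow> rat \<Rightarrow> 'c option" where
  "concat_word u v q =
     (if -3 < q \<and> q < -1 then u (squeeze_inv (q + 2))
      else if 1 < q \<and> q < 3 then v (squeeze_inv (q - 2))
      else None)"

definition word_class :: "(nat \<Rightarrow> ('a, 'b) monoid_scheme) \<Rightarrow> (rat \<Rightarrow> (nat \<times> 'a) option) \<Rightarrow> (rat \<Rightarrow> (nat \<times> 'a) option) set" where
  "word_class G u = {v. is_word G v \<and> word_equiv G u v}"

definition top_product :: "(nat \<Rightarrow> ('a, 'b) monoid_scheme) \<Rightarrow> ((rat \<Rightarrow> (nat \<times> 'a) option) set) monoid" where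
  "top_product G =
     \<lparr> carrier = word_class G ` {u. is_word G u},
       monoid.mult = (\<lambda>A B. word_class G (concat_word (SOME u. u \<in> A) (SOME v. v \<in> B))),
       monoid.one = word_class G (\<lambda>_. None) \<rparr>"

definition free_product_sub :: "(nat \<Rightarrow> ('a, 'b) monoid_scheme) \<Rightarrow> ((rat \<Rightarrow> (nat \<times> 'a) option) set) set" where
  "free_product_sub G = {C \<in> carrier (top_product G). \<exists>u \<in> C. finite {q. u q \<noteq> None}}"

definition normal_closure :: "('c, 'd) monoid_scheme \<Rightarrow> 'c set \<Rightarrow> 'c set" where
  "normal_closure H S = generate H (\<Union>g \<in> carrier H. (\<lambda>h. g \<otimes>\<^bsub>H\<^esub> h \<otimes>\<^bsub>H\<^esub> inv\<^bsub>H\<^esub> g) ` S)"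

definition archipelago where
  "archipelago G = top_product G Mod normal_closure (top_product G) (free_product_sub G)"

definition torsion_free :: "('c, 'd) monoid_scheme \<Rightarrow> bool" where
  "torsion_free H \<longleftrightarrow>
     (\<forall>x \<in> carrier H. \<forall>k::nat. k > 0 \<and> x [^]\<^bsub>H\<^esub> k = \<one>\<^bsub>H\<^esub> \<longrightarrow> x = \<one>\<^bsub>H\<^esub>)"

end

theory Submission
  imports Defs
begin

fun adj_ok :: "(nat \<times> 'a) list \<Rightarrow> bool" where
  "adj_ok (x # y # r) = (fst x \<noteq> fst y \<and> adj_ok (y # r))"
| "adj_ok _ = True"

definition pw :: "nat \<Rightarrow> 'x list \<Rightarrow> 'x list" where
  "pw k xs = concat (replicate k xs)"

locale fam =
  fixes G :: "nat \<Rightarrow> ('a, 'b) monoid_scheme"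
  assumes grp: "\<And>n. group (G n)"
begin

definition allc :: "(nat \<times> 'a) list \<Rightarrow> bool" where
  "allc xs \<longleftrightarrow> (\<forall>l\<in>set xs. snd l \<in> carrier (G (fst l)))"

definition valid :: "(nat \<times> 'a) list \<Rightarrow> bool" where
  "valid xs \<longleftrightarrow> (\<forall>l\<in>set xs. snd l \<in> carrier (G (fst l)) \<and> snd l \<noteq> \<one>\<^bsub>G (fst l)\<^esub>)"

definition reduced where "reduced xs \<longleftrightarrow> valid xs \<and> adj_ok xs"

definition act :: "nat \<Rightarrow> 'a \<Rightarrow> (nat \<times> 'a) list \<Rightarrow> (nat \<times> 'a) list" where
  "act n a r = (case r of [] \<Rightarrow> (if a = \<one>\<^bsub>G n\<^esub> then [] else [(n,a)])
     | (m,b) # r' \<Rightarrow> (if n = m then (if a \<otimes>\<^bsub>G n\<^esub> b = \<one>\<^bsub>G n\<^esub> then r' else (n, a \<otimes>\<^bsub>G n\<^esub> b) # r')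
                     else if a = \<one>\<^bsub>G n\<^esub> then r else (n,a) # r))"

definition ev :: "(nat \<times> 'a) list \<Rightarrow> (nat \<times> 'a) list" where
  "ev xs = foldr (\<lambda>l r. act (fst l) (snd l) r) xs []"

abbreviation feq (infix "\<sim>" 50) where "x \<sim> y \<equiv> fp_equiv G x y"

definition iv :: "(nat \<times> 'a) list \<Rightarrow> (nat \<times> 'a) list" where
  "iv xs = rev (map (\<lambda>l. (fst l, inv\<^bsub>G (fst l)\<^esub> (snd l))) xs)"

lemma gm_closed[simp]: "a \<in> carrier (G n) \<Longrightarrow> b \<in> carrier (G n) \<Longrightarrow> a \<otimes>\<^bsub>G n\<^esub> b \<in> carrier (G n)"
  by (simp add: group.subgroup_self[OF grp] monoid.m_closed[OF group.is_monoid[OF grp]])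
lemma gone[simp]: "\<one>\<^bsub>G n\<^esub> \<in> carrier (G n)"
  by (simp add: monoid.one_closed[OF group.is_monoid[OF grp]])
lemma gl_one[simp]: "a \<in> carrier (G n) \<Longrightarrow> \<one>\<^bsub>G n\<^esub> \<otimes>\<^bsub>G n\<^esub> a = a"
  by (simp add: monoid.l_one[OF group.is_monoid[OF grp]])
lemma gr_one[simp]: "a \<in> carrier (G n) \<Longrightarrow> a \<otimes>\<^bsub>G n\<^esub> \<one>\<^bsub>G n\<^esub> = a"
  by (simp add: monoid.r_one[OF group.is_monoid[OF grp]])
lemma ginv_closed[simp]: "a \<in> carrier (G n) \<Longrightarrow> inv\<^bsub>G n\<^esub> a \<in> carrier (G n)"
  by (simp add: group.inv_closed[OF grp])
lemma gassoc: "a \<in> carrier (G n) \<Longrightarrow> b \<in> carrier (G n) \<Longrightarrow> c \<in> carrier (G n) \<Longrightarrow> a \<otimes>\<^bsub>G n\<^esub> b \<otimes>\<^bsub>G n\<^esub> c = a \<otimes>\<^bsub>G n\<^esub> (b \<otimes>\<^bsub>G n\<^esub> c)"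
  by (simp add: monoid.m_assoc[OF group.is_monoid[OF grp]])

lemma valid_simps[simp]:
  "valid [] " "valid (x # xs) \<longleftrightarrow> snd x \<in> carrier (G (fst x)) \<and> snd x \<noteq> \<one>\<^bsub>G (fst x)\<^esub> \<and> valid xs"
  "valid (xs @ ys) \<longleftrightarrow> valid xs \<and> valid ys"
  by (auto simp: valid_def)

lemma allc_simps[simp]:
  "allc [] " "allc (x # xs) \<longleftrightarrow> snd x \<in> carrier (G (fst x)) \<and> allc xs"
  "allc (xs @ ys) \<longleftrightarrow> allc xs \<and> allc ys"
  by (auto simp: allc_def)

lemma valid_allc: "valid xs \<Longrightarrow> allc xs"
  by (auto simp: valid_def allc_def)

lemma reduced_tl: "reduced (x # r) \<Longrightarrow> reduced r"
  by (cases r) (auto simp: reduced_def)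

lemma reduced_Cons: "reduced (x # r) \<longleftrightarrow> snd x \<in> carrier (G (fst x)) \<and> snd x \<noteq> \<one>\<^bsub>G (fst x)\<^esub> \<and> reduced r \<and> (r \<noteq> [] \<longrightarrow> fst x \<noteq> fst (hd r))"
  by (cases r) (auto simp: reduced_def)

lemma reduced_Nil[simp]: "reduced []" by (simp add: reduced_def)

lemma act_reduced:
  assumes a: "a \<in> carrier (G n)" and r: "reduced r"
  shows "reduced (act n a r)"
proof (cases r)
  case Nil then show ?thesis using a by (auto simp: act_def reduced_Cons)
next
  case (Cons x r')
  obtain m b where x: "x = (m,b)" by force
  interpret g: group "G n" by (rule grp)
  show ?thesis
  proof (cases "n = m")
    case True
    then have b: "b \<in> carrier (G n)" using r Cons x by (auto simp: reduced_Cons)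
    show ?thesis using True Cons x r a b reduced_tl[of x r']
      by (auto simp: act_def reduced_Cons)
  next
    case False
    then show ?thesis using Cons x r a by (auto simp: act_def reduced_Cons)
  qed
qed

lemma act_act:
  assumes a: "a \<in> carrier (G n)" and b: "b \<in> carrier (G n)" and r: "reduced r"
  shows "act n a (act n b r) = act n (a \<otimes>\<^bsub>G n\<^esub> b) r"
proof -
  interpret g: group "G n" by (rule grp)
  show ?thesis
  proof (cases r)
    case Nil then show ?thesis using a b by (auto simp: act_def)
  next
    case (Cons x r')
    obtain m c where x: "x = (m,c)" by force
    show ?thesis
    proof (cases "n = m")
      case True
      then have c: "c \<in> carrier (G n)" using r Cons x by (auto simp: reduced_Cons)
      have r': "r' = [] \<or> fst (hd r') \<noteq> n" using r Cons x True by (auto simp: reduced_Cons)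
      show ?thesis
      proof (cases "b \<otimes>\<^bsub>G n\<^esub> c = \<one>\<^bsub>G n\<^esub>")
        case True
        then have e: "a \<otimes>\<^bsub>G n\<^esub> b \<otimes>\<^bsub>G n\<^esub> c = a" using a b c by (simp add: gassoc)
        show ?thesis
        proof (cases r')
          case Nil then show ?thesis using True e `n = m` Cons x by (auto simp: act_def)
        next
          case (Cons y r'')
          then show ?thesis using True e `n = m` `r = x # r'` x r' by (auto simp: act_def split: prod.splits)
        qed
      next
        case False
        then show ?thesis using `n = m` Cons x a b c by (auto simp: act_def gassoc)
      qed
    next
      case False
      then show ?thesis using Cons x a b by (auto simp: act_def)
    qed
  qed
qed

lemma ev_Cons[simp]: "ev (x # xs) = act (fst x) (snd x) (ev xs)"
  by (simp add: ev_def)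
lemma ev_Nil[simp]: "ev [] = []" by (simp add: ev_def)

lemma ev_reduced: "allc xs \<Longrightarrow> reduced (ev xs)"
  by (induction xs) (auto intro: act_reduced)

lemma act_reduced_id: "reduced ((n,a) # r) \<Longrightarrow> act n a r = (n,a) # r"
  by (cases r) (auto simp: act_def reduced_Cons)

lemma ev_reduced_id: "reduced r \<Longrightarrow> ev r = r"
proof (induction r)
  case (Cons x r)
  then have "ev r = r" using reduced_tl by blast
  then show ?case using Cons.prems act_reduced_id[of "fst x" "snd x" r] by simp
qed simp

lemma ev_append: "ev (xs @ ys) = foldr (\<lambda>l r. act (fst l) (snd l) r) xs (ev ys)"
  by (simp add: ev_def)

lemma step_allc: "fp_step G xs ys \<Longrightarrow> allc xs \<longleftrightarrow> allc ys"
proof (induction rule: fp_step.induct)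
  case (merge a n b xs ys)
  then show ?case using group.subgroup_self[OF grp] by (auto intro: monoid.m_closed[OF group.is_monoid[OF grp]])
qed auto

lemma step_ev: "fp_step G xs ys \<Longrightarrow> allc xs \<Longrightarrow> ev xs = ev ys"
proof (induction rule: fp_step.induct)
  case (merge a n b xs ys)
  then have "reduced (ev ys)" by (auto intro: ev_reduced)
  then show ?case using merge by (simp add: ev_append act_act)
next
  case (cancel a n b xs ys)
  then have "reduced (ev ys)" by (auto intro: ev_reduced)
  moreover have "act n \<one>\<^bsub>G n\<^esub> r = r" if "reduced r" for r
  proof (cases r)
    case (Cons x r')
    obtain m c where x: "x = (m,c)" by force
    then show ?thesis using that Cons by (cases "n = m") (auto simp: act_def reduced_Cons)
  qed (simp add: act_def)
  ultimately show ?case using cancel by (simp add: ev_append act_act)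
qed

lemma feq_ev: "x \<sim> y \<Longrightarrow> allc x \<Longrightarrow> ev x = ev y \<and> allc y"
  unfolding fp_equiv_def
proof (induction rule: equivclp_induct)
  case base then show ?case by simp
next
  case (step y z)
  then show ?case using step_allc step_ev by metis
qed

lemma step_ctxt: "fp_step G x y \<Longrightarrow> fp_step G (p @ x @ s) (p @ y @ s)"
proof (induction rule: fp_step.induct)
  case (merge a n b xs ys)
  then show ?case using fp_step.merge[where G=G and a=a and n=n and b=b and xs="p @ xs" and ys="ys @ s"] by simp
next
  case (cancel a n b xs ys)
  then show ?case using fp_step.cancel[where G=G and a=a and n=n and b=b and xs="p @ xs" and ys="ys @ s"] by simp
qed

lemma feq_ctxt: "x \<sim> y \<Longrightarrow> (p @ x @ s) \<sim> (p @ y @ s)"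
  unfolding fp_equiv_def
proof (induction rule: equivclp_induct)
  case (step y z)
  then show ?case using step_ctxt by (meson equivclp_into_equivclp)
qed simp

lemma feq_refl[simp]: "x \<sim> x" by (simp add: fp_equiv_def)
lemma feq_sym: "x \<sim> y \<Longrightarrow> y \<sim> x" by (simp add: fp_equiv_def equivclp_sym)
lemma feq_trans: "x \<sim> y \<Longrightarrow> y \<sim> z \<Longrightarrow> x \<sim> z" unfolding fp_equiv_def by (rule equivclp_trans)
lemma feq_step: "fp_step G x y \<Longrightarrow> x \<sim> y" unfolding fp_equiv_def by blast

lemma feq_app: "a \<sim> b \<Longrightarrow> c \<sim> d \<Longrightarrow> (a @ c) \<sim> (b @ d)"
  using feq_ctxt[of a b "[]" c] feq_ctxt[of c d b "[]"] by (simp add: feq_trans)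

lemma act_feq: "reduced r \<Longrightarrow> valid [(n,a)] \<Longrightarrow> ((n,a) # r) \<sim> act n a r"
proof (cases r)
  case (Cons x r')
  assume r: "reduced r" and v: "valid [(n,a)]"
  obtain m b where x: "x = (m,b)" by force
  have b: "b \<in> carrier (G m)" using r Cons x by (auto simp: reduced_Cons)
  show ?thesis
  proof (cases "n = m")
    case True
    have b': "b \<in> carrier (G n)" using b True by simp
    have a': "a \<in> carrier (G n)" using v by simp
    have st: "a \<otimes>\<^bsub>G n\<^esub> b = \<one>\<^bsub>G n\<^esub> \<Longrightarrow> fp_step G ([] @ [(n,a),(n,b)] @ r') ([] @ r')"
      "a \<otimes>\<^bsub>G n\<^esub> b \<noteq> \<one>\<^bsub>G n\<^esub> \<Longrightarrow> fp_step G ([] @ [(n,a),(n,b)] @ r') ([] @ [(n, a \<otimes>\<^bsub>G n\<^esub> b)] @ r')"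
      by (rule fp_step.cancel[where G=G and n=n, OF a' b'], assumption) (rule fp_step.merge[where G=G and n=n, OF a' b'], assumption)
    then show ?thesis using True Cons x by (auto simp: act_def intro: feq_step)
  next
    case False then show ?thesis using Cons x v by (auto simp: act_def)
  qed
qed (auto simp: act_def)

lemma feq_ev_self: "valid xs \<Longrightarrow> xs \<sim> ev xs"
proof (induction xs)
  case (Cons x xs)
  obtain n a where x: "x = (n,a)" by force
  have "(x # xs) \<sim> (x # ev xs)" using Cons feq_ctxt[of xs "ev xs" "[x]" "[]"] by simp
  moreover have "(x # ev xs) \<sim> ev (x # xs)" using act_feq[of "ev xs" n a] Cons.prems x
    by (auto intro: ev_reduced valid_allc)
  ultimately show ?case by (rule feq_trans)
qed simp

lemma feq_iff: "valid x \<Longrightarrow> valid y \<Longrightarrow> x \<sim> y \<longleftrightarrow> ev x = ev y"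
  using feq_ev valid_allc feq_ev_self feq_sym feq_trans by metis

lemma valid_iv: "valid xs \<Longrightarrow> valid (iv xs)"
  by (auto simp: valid_def iv_def group.inv_eq_1_iff[OF grp] dest: group.inv_closed[OF grp])

lemma iv_simps[simp]: "iv [] = []" "iv (xs @ ys) = iv ys @ iv xs"
  "iv (x # xs) = iv xs @ [(fst x, inv\<^bsub>G (fst x)\<^esub> (snd x))]"
  by (auto simp: iv_def)

lemma cancel_pair: "a \<in> carrier (G n) \<Longrightarrow> b \<in> carrier (G n) \<Longrightarrow> a \<otimes>\<^bsub>G n\<^esub> b = \<one>\<^bsub>G n\<^esub> \<Longrightarrow> [(n,a),(n,b)] \<sim> []"
  using fp_step.cancel[where xs="[]" and ys="[]" and a=a and b=b and n=n and G=G] by (auto intro: feq_step)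

lemma inv_right: "valid v \<Longrightarrow> (v @ iv v) \<sim> []"
proof (induction v)
  case (Cons x v)
  obtain n a where x: "x = (n,a)" by force
  have "(x # v @ iv v @ [(n, inv\<^bsub>G n\<^esub> a)]) \<sim> ([x] @ [] @ [(n, inv\<^bsub>G n\<^esub> a)])"
    using feq_ctxt[of "v @ iv v" "[]" "[x]"] Cons by auto
  moreover have "[(n,a),(n, inv\<^bsub>G n\<^esub> a)] \<sim> []" using Cons.prems x
    by (intro cancel_pair) (auto simp: group.r_inv[OF grp] group.inv_closed[OF grp])
  ultimately show ?case using x by (auto intro: feq_trans)
qed simp

lemma inv_left: "valid v \<Longrightarrow> (iv v @ v) \<sim> []"
proof (induction v)
  case (Cons x v)
  obtain n a where x: "x = (n,a)" by force
  have "[(n, inv\<^bsub>G n\<^esub> a),(n,a)] \<sim> []" using Cons.prems x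
    by (intro cancel_pair) (auto simp: group.l_inv[OF grp] group.inv_closed[OF grp])
  then have "(iv v @ [(n, inv\<^bsub>G n\<^esub> a),(n,a)] @ v) \<sim> (iv v @ [] @ v)" by (rule feq_ctxt)
  then show ?case using Cons x by (auto intro: feq_trans)
qed simp

end

lemma pw_0[simp]: "pw 0 x = []" and pw_Suc: "pw (Suc k) x = x @ pw k x"
  by (simp_all add: pw_def)

lemma pw_Suc2: "pw (Suc k) x = pw k x @ x"
  by (induction k) (simp_all add: pw_def)

lemma filter_pw: "filter P (pw k x) = pw k (filter P x)"
  by (induction k) (simp_all add: pw_Suc)

lemma adj_ok_Cons: "adj_ok (x # r) \<longleftrightarrow> adj_ok r \<and> (r \<noteq> [] \<longrightarrow> fst x \<noteq> fst (hd r))"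
  by (cases r) auto

lemma adj_ok_append: "adj_ok r \<Longrightarrow> adj_ok s \<Longrightarrow> (r \<noteq> [] \<Longrightarrow> s \<noteq> [] \<Longrightarrow> fst (last r) \<noteq> fst (hd s)) \<Longrightarrow> adj_ok (r @ s)"
  by (induction r) (auto simp: adj_ok_Cons hd_append split: if_splits)

lemma hd_pw: "0 < k \<Longrightarrow> r \<noteq> [] \<Longrightarrow> hd (pw k r) = hd r"
  by (cases k) (auto simp: pw_Suc)

lemma pw_nonempty: "0 < k \<Longrightarrow> r \<noteq> [] \<Longrightarrow> pw k r \<noteq> []"
  by (cases k) (auto simp: pw_Suc)

context fam begin

declare feq_trans [trans]

lemma valid_pw: "valid x \<Longrightarrow> valid (pw k x)"
  by (induction k) (auto simp: pw_Suc)

lemma feq_pw: "x \<sim> y \<Longrightarrow> pw k x \<sim> pw k y"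
  by (induction k) (auto simp: pw_Suc intro: feq_app)

lemma reduced_pw:
  assumes "reduced r" "r \<noteq> []" "fst (hd r) \<noteq> fst (last r)"
  shows "reduced (pw k r)"
proof (induction k)
  case 0 then show ?case by simp
next
  case (Suc k)
  have "adj_ok (r @ pw k r)"
  proof (rule adj_ok_append)
    show "adj_ok r" using assms by (simp add: reduced_def)
    show "adj_ok (pw k r)" using Suc by (simp add: reduced_def)
    show "fst (last r) \<noteq> fst (hd (pw k r))" if "pw k r \<noteq> []"
      using that assms hd_pw[of k r] by (cases k) auto
  qed
  then show ?case using Suc assms by (simp add: reduced_def pw_Suc)
qed

lemma length_act: "length (act n a r) \<le> Suc (length r)"
  by (auto simp: act_def split: list.splits)

lemma length_ev: "length (ev xs) \<le> length xs"
proof (induction xs)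
  case (Cons x xs)
  then show ?case using length_act[of "fst x" "snd x" "ev xs"] by simp
qed simp

lemma reduced_valid: "reduced r \<Longrightarrow> valid r" by (simp add: reduced_def)

lemma conj_pw: "valid v \<Longrightarrow> pw k (iv v @ r @ v) \<sim> iv v @ pw k r @ v"
proof (induction k)
  case 0
  then show ?case using inv_left[of v] feq_sym by simp
next
  case (Suc k)
  have "pw (Suc k) (iv v @ r @ v) \<sim> (iv v @ r @ v) @ (iv v @ pw k r @ v)"
    using Suc by (simp add: pw_Suc feq_app)
  also have "(iv v @ r @ v) @ (iv v @ pw k r @ v) = (iv v @ r) @ (v @ iv v) @ (pw k r @ v)" by simp
  also have "\<dots> \<sim> (iv v @ r) @ [] @ (pw k r @ v)" using inv_right[OF Suc.prems] by (rule feq_ctxt)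
  finally show ?case by (simp add: pw_Suc)
qed

lemma tors_red:
  "reduced r \<Longrightarrow> 0 < k \<Longrightarrow> pw k r \<sim> [] \<Longrightarrow>
   \<exists>v h j. valid v \<and> valid h \<and> (\<forall>l\<in>set h. fst l = j) \<and> r \<sim> (v @ h @ iv v)"
proof (induction "length r" arbitrary: r rule: less_induct)
  case less
  show ?case
  proof (cases "length r \<le> 1")
    case True
    then have "\<forall>l\<in>set r. fst l = fst (hd r)"
      by (cases r) auto
    then show ?thesis using less.prems(1) reduced_valid by (intro exI[of _ "[]"] exI[of _ r]) auto
  next
    case False
    then obtain x r1 where r: "r = x # r1" and "r1 \<noteq> []" by (cases r) auto
    then obtain s y where r1: "r1 = s @ [y]" by (cases r1 rule: rev_exhaust) auto
    obtain n a where x: "x = (n,a)" by force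
    obtain m b where y: "y = (m,b)" by force
    have vr: "valid r" using less.prems reduced_valid by blast
    show ?thesis
    proof (cases "n = m")
      case False
      then have "reduced (pw k r)" using less.prems r r1 x y by (intro reduced_pw) auto
      then have "ev (pw k r) = pw k r" by (rule ev_reduced_id)
      moreover have "ev (pw k r) = ev []" using less.prems feq_iff[of "pw k r" "[]"] valid_pw[OF vr] by simp
      ultimately show ?thesis using pw_nonempty[OF less.prems(2), of r] r by simp
    next
      case True
      have a: "a \<in> carrier (G n)" "a \<noteq> \<one>\<^bsub>G n\<^esub>" using vr r x by auto
      have b: "b \<in> carrier (G n)" "b \<noteq> \<one>\<^bsub>G n\<^esub>" using vr r r1 y True by auto
      define c where "c = b \<otimes>\<^bsub>G n\<^esub> a"
      define z where "z = s @ (if c = \<one>\<^bsub>G n\<^esub> then [] else [(n,c)])"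
      have vs: "valid s" using vr r r1 by simp
      have vz: "valid z" using vs a b by (auto simp: z_def c_def)
      have st: "fp_step G (s @ [(n,b),(n,a)] @ []) z"
        unfolding z_def
        using fp_step.cancel[where G=G and n=n and a=b and b=a and xs=s and ys="[]"]
              fp_step.merge[where G=G and n=n and a=b and b=a and xs=s and ys="[]"] a b
        by (auto simp: c_def)
      define r2 where "r2 = ev z"
      have red2: "reduced r2" unfolding r2_def by (rule ev_reduced[OF valid_allc[OF vz]])
      have "length z \<le> Suc (length s)" by (simp add: z_def)
      then have len: "length r2 < length r" using length_ev[of z] r r1 by (simp add: r2_def)
      have zr2: "z \<sim> r2" unfolding r2_def by (rule feq_ev_self[OF vz])
      have vx: "valid [x]" using vr r by simp
      have "iv [x] @ r @ [x] = (iv [x] @ [x]) @ (s @ [(n,b),(n,a)] @ [])" using r r1 x y True by simp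
      also have "\<dots> \<sim> [] @ (s @ [(n,b),(n,a)] @ [])" using inv_left[OF vx] by (rule feq_app) simp
      also have "\<dots> \<sim> z" using st by (simp add: feq_step)
      also have "\<dots> \<sim> r2" by (rule zr2)
      finally have conj: "iv [x] @ r @ [x] \<sim> r2" .
      have "pw k r2 \<sim> pw k (iv [x] @ r @ [x])" using feq_pw[OF feq_sym[OF conj]] .
      also have "\<dots> \<sim> iv [x] @ pw k r @ [x]" by (rule conj_pw[OF vx])
      also have "\<dots> \<sim> iv [x] @ [] @ [x]" using less.prems(3) by (rule feq_ctxt)
      also have "\<dots> \<sim> []" using inv_left[OF vx] by simp
      finally have "pw k r2 \<sim> []" .
      then obtain v h j where IH: "valid v" "valid h" "\<forall>l\<in>set h. fst l = j" "r2 \<sim> v @ h @ iv v"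
        using less.hyps[OF len red2 less.prems(2)] by blast
      have "r = [] @ r @ []" by simp
      also have "\<dots> \<sim> ([x] @ iv [x]) @ r @ ([x] @ iv [x])"
        using feq_app[OF feq_sym[OF inv_right[OF vx]] feq_app[OF feq_refl feq_sym[OF inv_right[OF vx]]]] .
      also have "\<dots> = [x] @ (iv [x] @ r @ [x]) @ iv [x]" by simp
      also have "\<dots> \<sim> [x] @ r2 @ iv [x]" using conj by (rule feq_ctxt)
      also have "\<dots> \<sim> [x] @ (v @ h @ iv v) @ iv [x]" using IH(4) by (rule feq_ctxt)
      also have "\<dots> = (x # v) @ h @ iv (x # v)" by (simp add: iv_def)
      finally show ?thesis using IH vx by (intro exI[of _ "x # v"] exI[of _ h] exI[of _ j]) auto
    qed
  qed
qed

lemma tors: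
  assumes "valid x" "0 < k" "pw k x \<sim> []"
  shows "\<exists>v h j. valid v \<and> valid h \<and> (\<forall>l\<in>set h. fst l = j) \<and> x \<sim> (v @ h @ iv v)"
proof -
  have xr: "x \<sim> ev x" by (rule feq_ev_self[OF assms(1)])
  have "pw k (ev x) \<sim> []" using feq_trans[OF feq_pw[OF feq_sym[OF xr]] assms(3)] .
  then obtain v h j where "valid v" "valid h" "\<forall>l\<in>set h. fst l = j" "ev x \<sim> v @ h @ iv v"
    using tors_red[OF ev_reduced[OF valid_allc[OF assms(1)]] assms(2)] by blast
  then show ?thesis using feq_trans[OF xr] by blast
qed

lemma step_filter: "fp_step G x y \<Longrightarrow> fp_step G (filter (\<lambda>l. Q (fst l)) x) (filter (\<lambda>l. Q (fst l)) y) \<or> filter (\<lambda>l. Q (fst l)) x = filter (\<lambda>l. Q (fst l)) y"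
proof (induction rule: fp_step.induct)
  case (merge a n b xs ys)
  then show ?case using fp_step.merge[where G=G and a=a and n=n and b=b and xs="filter (\<lambda>l. Q (fst l)) xs" and ys="filter (\<lambda>l. Q (fst l)) ys"] by auto
next
  case (cancel a n b xs ys)
  then show ?case using fp_step.cancel[where G=G and a=a and n=n and b=b and xs="filter (\<lambda>l. Q (fst l)) xs" and ys="filter (\<lambda>l. Q (fst l)) ys"] by auto
qed

lemma feq_filter: "x \<sim> y \<Longrightarrow> filter (\<lambda>l. Q (fst l)) x \<sim> filter (\<lambda>l. Q (fst l)) y"
  unfolding fp_equiv_def
proof (induction rule: equivclp_induct)
  case (step y z)
  then show ?case using step_filter[of y z Q] step_filter[of z y Q]
    by (metis equivclp_into_equivclp)
qed simp

lemma filter_iv: "filter (\<lambda>l. Q (fst l)) (iv v) = iv (filter (\<lambda>l. Q (fst l)) v)"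
  by (induction v) auto

lemma valid_filter: "valid x \<Longrightarrow> valid (filter P x)"
  by (auto simp: valid_def)

lemma proj_tors:
  assumes "valid x" "0 < k" "pw k x \<sim> []"
  shows "filter (\<lambda>l. Q (fst l)) x \<sim> [] \<or> filter (\<lambda>l. \<not> Q (fst l)) x \<sim> []"
proof -
  obtain v h j where vh: "valid v" "valid h" "\<forall>l\<in>set h. fst l = j" "x \<sim> (v @ h @ iv v)"
    using tors[OF assms] by blast
  show ?thesis
  proof (cases "Q j")
    case True
    have "filter (\<lambda>l. \<not> Q (fst l)) h = []" using vh(3) True by (auto simp: filter_empty_conv)
    then have "filter (\<lambda>l. \<not> Q (fst l)) x \<sim> filter (\<lambda>l. \<not> Q (fst l)) v @ iv (filter (\<lambda>l. \<not> Q (fst l)) v)"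
      using feq_filter[OF vh(4), of "\<lambda>n. \<not> Q n"] filter_iv[of "\<lambda>n. \<not> Q n"] by simp
    then show ?thesis using inv_right[OF valid_filter[OF vh(1)]] feq_trans by blast
  next
    case False
    have "filter (\<lambda>l. Q (fst l)) h = []" using vh(3) False by (auto simp: filter_empty_conv)
    then have "filter (\<lambda>l. Q (fst l)) x \<sim> filter (\<lambda>l. Q (fst l)) v @ iv (filter (\<lambda>l. Q (fst l)) v)"
      using feq_filter[OF vh(4), of Q] filter_iv[of Q] by simp
    then show ?thesis using inv_right[OF valid_filter[OF vh(1)]] feq_trans by blast
  qed
qed

end

definition sq :: "rat \<Rightarrow> rat" where "sq x = x / (1 + \<bar>x\<bar>)"

lemma sq_bound: "\<bar>sq x\<bar> < 1"
proof -
  have p: "1 + \<bar>x\<bar> > 0" by simp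
  have "\<bar>sq x\<bar> = \<bar>x\<bar> / (1 + \<bar>x\<bar>)" unfolding sq_def abs_divide using p by simp
  also have "\<dots> < 1" using p by (subst divide_less_eq_1_pos) auto
  finally show ?thesis .
qed

lemma aux1: "0 < 1 + (t::rat) \<Longrightarrow> 1 - t / (1 + t) = 1 / (1 + t)"
  by (simp add: field_simps)
lemma aux2: "0 < 1 - (t::rat) \<Longrightarrow> 1 + t / (1 - t) = 1 / (1 - t)"
  by (simp add: field_simps)

lemma squeeze_inv_sq: "squeeze_inv (sq x) = x"
proof -
  have p: "1 + \<bar>x\<bar> > 0" by simp
  have "\<bar>sq x\<bar> = \<bar>x\<bar> / (1 + \<bar>x\<bar>)" unfolding sq_def abs_divide using p by simp
  then have "1 - \<bar>sq x\<bar> = 1 / (1 + \<bar>x\<bar>)" using aux1[OF p] by simp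
  then show ?thesis using p by (simp add: squeeze_inv_def sq_def)
qed

lemma sq_squeeze_inv: "\<bar>y\<bar> < 1 \<Longrightarrow> sq (squeeze_inv y) = y"
proof -
  assume y: "\<bar>y\<bar> < 1"
  then have p: "1 - \<bar>y\<bar> > 0" by simp
  have "\<bar>squeeze_inv y\<bar> = \<bar>y\<bar> / (1 - \<bar>y\<bar>)" unfolding squeeze_inv_def abs_divide using p by simp
  then have "1 + \<bar>squeeze_inv y\<bar> = 1 / (1 - \<bar>y\<bar>)" using aux2[OF p] by simp
  then show ?thesis using p by (simp add: squeeze_inv_def sq_def)
qed
lemma sq_mono: "x < y \<Longrightarrow> sq x < sq y"
proof -
  assume xy: "x < y"
  have px: "1 + \<bar>x\<bar> > 0" and py: "1 + \<bar>y\<bar> > 0" by simp_all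
  have key: "x * (1 + \<bar>y\<bar>) < y * (1 + \<bar>x\<bar>)"
  proof (cases "0 \<le> x")
    case True
    then have "0 \<le> y" using xy by simp
    then show ?thesis using True xy by (simp add: algebra_simps)
  next
    case False
    show ?thesis
    proof (cases "0 \<le> y")
      case True
      have "x * (1 + \<bar>y\<bar>) < 0" using False by (intro mult_neg_pos) auto
      moreover have "0 \<le> y * (1 + \<bar>x\<bar>)" using True by simp
      ultimately show ?thesis by linarith
    next
      case False2: False
      then show ?thesis using False xy by (simp add: algebra_simps)
    qed
  qed
  have e: "sq x - sq y = (x * (1 + \<bar>y\<bar>) - y * (1 + \<bar>x\<bar>)) / ((1 + \<bar>x\<bar>) * (1 + \<bar>y\<bar>))"
    using px py unfolding sq_def by (simp add: field_simps)
  have "(x * (1 + \<bar>y\<bar>) - y * (1 + \<bar>x\<bar>)) / ((1 + \<bar>x\<bar>) * (1 + \<bar>y\<bar>)) < 0"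
    using key px py by (intro divide_neg_pos) auto
  then show ?thesis using e by linarith
qed


lemma sq_bounds: "-1 < sq x" "sq x < 1"
  using sq_bound[of x] by (auto simp: abs_less_iff)

lemma sorted_sq: "sorted_wrt (<) xs \<Longrightarrow> sorted_wrt (\<lambda>x y. sq x < sq y) xs"
  by (rule sorted_wrt_mono_rel[of _ "(<)"]) (auto intro: sq_mono)

definition LS :: "(nat \<Rightarrow> 'a \<Rightarrow> bool) \<Rightarrow> (rat \<Rightarrow> (nat \<times> 'a) option) \<Rightarrow> rat set" where
  "LS R w = {q. \<exists>n a. w q = Some (n,a) \<and> R n a}"

definition pos where "pos m w = LS (\<lambda>n a. n \<le> m) w"

definition wr :: "(rat \<Rightarrow> bool) \<Rightarrow> (rat \<Rightarrow> 'c option) \<Rightarrow> rat \<Rightarrow> 'c option" where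
  "wr P w = (\<lambda>q. if P q then w q else None)"

lemma restr_pos: "restr m w = map (\<lambda>q. the (w q)) (sorted_list_of_set (pos m w))"
  by (simp add: restr_def pos_def LS_def)

lemma slos_eq: "finite A \<Longrightarrow> sorted_wrt (<) l \<Longrightarrow> set l = A \<Longrightarrow> sorted_list_of_set A = l"
  by (metis sorted_list_of_set.set_sorted_key_list_of_set sorted_list_of_set.strict_sorted_key_list_of_set strict_sorted_equal)

lemma slos_filter: "finite A \<Longrightarrow> sorted_list_of_set {x\<in>A. P x} = filter P (sorted_list_of_set A)"
  by (rule slos_eq) (auto intro: sorted_wrt_filter)

lemma concat_lo: "concat_word u v (sq p - 2) = u p"
  using sq_bounds[of p] by (simp add: concat_word_def squeeze_inv_sq)
lemma concat_hi: "concat_word u v (sq p + 2) = v p"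
  using sq_bounds[of p] by (simp add: concat_word_def squeeze_inv_sq)

lemma LS_concat: "LS R (concat_word u v) = (\<lambda>p. sq p - 2) ` LS R u \<union> (\<lambda>p. sq p + 2) ` LS R v"
proof (intro equalityI subsetI)
  fix q assume "q \<in> LS R (concat_word u v)"
  then obtain n a where q: "concat_word u v q = Some (n,a)" "R n a" by (auto simp: LS_def)
  show "q \<in> (\<lambda>p. sq p - 2) ` LS R u \<union> (\<lambda>p. sq p + 2) ` LS R v"
  proof (cases "-3 < q \<and> q < -1")
    case True
    then have "sq (squeeze_inv (q + 2)) = q + 2" by (intro sq_squeeze_inv) (auto simp: abs_less_iff)
    then have "q = sq (squeeze_inv (q + 2)) - 2" by simp
    moreover have "squeeze_inv (q + 2) \<in> LS R u" using q True by (auto simp: LS_def concat_word_def)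
    ultimately show ?thesis by blast
  next
    case False
    then have F: "1 < q \<and> q < 3" using q by (auto simp: concat_word_def split: if_splits)
    then have "sq (squeeze_inv (q - 2)) = q - 2" by (intro sq_squeeze_inv) (auto simp: abs_less_iff)
    then have "q = sq (squeeze_inv (q - 2)) + 2" by simp
    moreover have "squeeze_inv (q - 2) \<in> LS R v" using q F by (auto simp: LS_def concat_word_def)
    ultimately show ?thesis by blast
  qed
next
  fix q assume "q \<in> (\<lambda>p. sq p - 2) ` LS R u \<union> (\<lambda>p. sq p + 2) ` LS R v"
  then show "q \<in> LS R (concat_word u v)"
    by (auto simp: LS_def concat_lo concat_hi)
qed

definition inv_word :: "(nat \<Rightarrow> ('a, 'b) monoid_scheme) \<Rightarrow> (rat \<Rightarrow> (nat \<times> 'a) option) \<Rightarrow> rat \<Rightarrow> (nat \<times> 'a) option" where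
  "inv_word G u q = map_option (\<lambda>l. (fst l, inv\<^bsub>G (fst l)\<^esub> (snd l))) (u (- q))"

lemma LS_wr: "LS R (wr P w) = {q \<in> LS R w. P q}"
  by (auto simp: LS_def wr_def)

context fam begin

lemma finite_LS: "is_word G w \<Longrightarrow> finite (LS (\<lambda>n a. n = k) w)"
  unfolding is_word_def LS_def by simp

lemma finite_pos: "is_word G w \<Longrightarrow> finite (pos m w)"
proof -
  assume w: "is_word G w"
  have "pos m w \<subseteq> (\<Union>k\<in>{..m}. LS (\<lambda>n a. n = k) w)" by (auto simp: pos_def LS_def)
  moreover have "finite (\<Union>k\<in>{..m}. LS (\<lambda>n a. n = k) w)" using finite_LS[OF w] by simp
  ultimately show ?thesis by (rule finite_subset)
qed

lemma word_letter: "is_word G w \<Longrightarrow> w q = Some (n,a) \<Longrightarrow> a \<in> carrier (G n) \<and> a \<noteq> \<one>\<^bsub>G n\<^esub>"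
  unfolding is_word_def by blast

lemma valid_restr: "is_word G w \<Longrightarrow> valid (restr m w)"
  using finite_pos[of w m] word_letter[of w]
  by (fastforce simp: restr_pos valid_def pos_def LS_def)

lemma restr_fst: "is_word G w \<Longrightarrow> l \<in> set (restr m w) \<Longrightarrow> fst l \<le> m"
  using finite_pos[of w m] by (fastforce simp: restr_pos pos_def LS_def)

lemma restr_None[simp]: "restr m (\<lambda>_. None) = []"
  by (simp add: restr_def)

lemma is_word_None[simp]: "is_word G (\<lambda>_. None)"
  by (simp add: is_word_def)

lemma is_word_wr: "is_word G w \<Longrightarrow> is_word G (wr P w)"
proof -
  assume w: "is_word G w"
  have "{q. \<exists>a. wr P w q = Some (n,a)} \<subseteq> {q. \<exists>a. w q = Some (n,a)}" for n
    by (auto simp: wr_def)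
  then have "finite {q. \<exists>a. wr P w q = Some (n,a)}" for n
    using w unfolding is_word_def by (meson finite_subset)
  moreover have "\<forall>q n a. wr P w q = Some (n, a) \<longrightarrow> a \<in> carrier (G n) \<and> a \<noteq> \<one>\<^bsub>G n\<^esub>"
    using w unfolding is_word_def wr_def by auto
  ultimately show ?thesis unfolding is_word_def by blast
qed

lemma pos_wr: "pos m (wr P w) = {q \<in> pos m w. P q}"
  by (simp add: pos_def LS_wr)

lemma restr_wr: "is_word G w \<Longrightarrow> restr m (wr P w) = map (\<lambda>q. the (w q)) (filter P (sorted_list_of_set (pos m w)))"
proof -
  assume w: "is_word G w"
  have "restr m (wr P w) = map (\<lambda>q. the (wr P w q)) (filter P (sorted_list_of_set (pos m w)))"
    using finite_pos[OF w, of m] by (simp add: restr_pos pos_wr slos_filter)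
  also have "\<dots> = map (\<lambda>q. the (w q)) (filter P (sorted_list_of_set (pos m w)))"
    by (rule map_cong) (auto simp: wr_def)
  finally show ?thesis .
qed

lemma is_word_concat: "is_word G u \<Longrightarrow> is_word G v \<Longrightarrow> is_word G (concat_word u v)"
proof -
  assume u: "is_word G u" and v: "is_word G v"
  have "finite (LS (\<lambda>n a. n = k) (concat_word u v))" for k
    using finite_LS[OF u, of k] finite_LS[OF v, of k] by (simp add: LS_concat)
  moreover have "a \<in> carrier (G n) \<and> a \<noteq> \<one>\<^bsub>G n\<^esub>" if "concat_word u v q = Some (n,a)" for q n a
    using that word_letter[OF u] word_letter[OF v] by (auto simp: concat_word_def split: if_splits)
  ultimately show ?thesis unfolding is_word_def LS_def by auto
qed

lemma restr_concat: "is_word G u \<Longrightarrow> is_word G v \<Longrightarrow> restr m (concat_word u v) = restr m u @ restr m v"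
proof -
  assume u: "is_word G u" and v: "is_word G v"
  let ?Lu = "sorted_list_of_set (pos m u)" and ?Lv = "sorted_list_of_set (pos m v)"
  have "sorted_list_of_set (pos m (concat_word u v)) = map (\<lambda>p. sq p - 2) ?Lu @ map (\<lambda>p. sq p + 2) ?Lv"
  proof (rule slos_eq)
    show "finite (pos m (concat_word u v))" by (rule finite_pos[OF is_word_concat[OF u v]])
    show "set (map (\<lambda>p. sq p - 2) ?Lu @ map (\<lambda>p. sq p + 2) ?Lv) = pos m (concat_word u v)"
      using finite_pos[OF u, of m] finite_pos[OF v, of m] by (simp add: pos_def LS_concat)
    have "sorted_wrt (<) ?Lu" "sorted_wrt (<) ?Lv" by simp_all
    then have 1: "sorted_wrt (\<lambda>x y. sq x - 2 < sq y - 2) ?Lu" "sorted_wrt (\<lambda>x y. sq x + 2 < sq y + 2) ?Lv"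
      using sorted_sq by simp_all
    have 2: "sq x - 2 < sq y + 2" for x y using sq_bounds[of x] sq_bounds[of y] by linarith
    show "sorted_wrt (<) (map (\<lambda>p. sq p - 2) ?Lu @ map (\<lambda>p. sq p + 2) ?Lv)"
      unfolding sorted_wrt_append sorted_wrt_map using 1 2 by simp
  qed
  then show ?thesis by (simp add: restr_pos concat_lo concat_hi)
qed

end

lemma split3: "sorted_wrt (<) (L::rat list) \<Longrightarrow> L = filter (\<lambda>q. q < c) L @ filter (\<lambda>q. q = c) L @ filter (\<lambda>q. c < q) L"
proof (induction L)
  case (Cons x L)
  then have IH: "L = filter (\<lambda>q. q < c) L @ filter (\<lambda>q. q = c) L @ filter (\<lambda>q. c < q) L"
    and gt: "\<forall>y\<in>set L. x < y" by auto
  show ?case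
  proof (cases "x < c")
    case True then show ?thesis using IH by simp
  next
    case False
    then have "\<forall>y\<in>set L. c < y" using gt by force
    then have "filter (\<lambda>q. q < c) L = []" "filter (\<lambda>q. q = c) L = []" "filter (\<lambda>q. c < q) L = L"
      by (auto simp: filter_empty_conv)
    then show ?thesis using False by auto
  qed
qed simp

context fam begin

lemma LS_inv: "LS R (inv_word G u) = uminus ` LS (\<lambda>n a. R n (inv\<^bsub>G n\<^esub> a)) u"
proof (intro equalityI subsetI)
  fix q assume "q \<in> LS R (inv_word G u)"
  then obtain n a where "inv_word G u q = Some (n, a)" "R n a" by (auto simp: LS_def)
  then obtain b where "u (- q) = Some (n, b)" "a = inv\<^bsub>G n\<^esub> b" by (auto simp: inv_word_def)
  then have "- q \<in> LS (\<lambda>n a. R n (inv\<^bsub>G n\<^esub> a)) u" using \<open>R n a\<close> by (auto simp: LS_def)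
  then show "q \<in> uminus ` LS (\<lambda>n a. R n (inv\<^bsub>G n\<^esub> a)) u" by (metis image_eqI minus_minus)
next
  fix q assume "q \<in> uminus ` LS (\<lambda>n a. R n (inv\<^bsub>G n\<^esub> a)) u"
  then show "q \<in> LS R (inv_word G u)" by (auto simp: LS_def inv_word_def)
qed

lemma is_word_inv: "is_word G u \<Longrightarrow> is_word G (inv_word G u)"
proof -
  assume u: "is_word G u"
  have "finite (LS (\<lambda>n a. n = k) (inv_word G u))" for k
    using finite_LS[OF u, of k] by (simp add: LS_inv)
  moreover have "a \<in> carrier (G n) \<and> a \<noteq> \<one>\<^bsub>G n\<^esub>" if "inv_word G u q = Some (n,a)" for q n a
    using that word_letter[OF u] group.inv_eq_1_iff[OF grp] by (auto simp: inv_word_def)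
  ultimately show ?thesis unfolding is_word_def LS_def by auto
qed

lemma restr_inv: "is_word G u \<Longrightarrow> restr m (inv_word G u) = iv (restr m u)"
proof -
  assume u: "is_word G u"
  let ?L = "sorted_list_of_set (pos m u)"
  have pinv: "pos m (inv_word G u) = uminus ` pos m u" by (simp add: pos_def LS_inv)
  have "sorted_list_of_set (pos m (inv_word G u)) = rev (map uminus ?L)"
  proof (rule slos_eq)
    show "finite (pos m (inv_word G u))" by (rule finite_pos[OF is_word_inv[OF u]])
    show "set (rev (map uminus ?L)) = pos m (inv_word G u)" using finite_pos[OF u, of m] pinv by simp
    show "sorted_wrt (<) (rev (map uminus ?L))" by (simp add: sorted_wrt_rev sorted_wrt_map)
  qed
  moreover have "the (inv_word G u (- q)) = (fst (the (u q)), inv\<^bsub>G (fst (the (u q)))\<^esub> (snd (the (u q))))"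
    if "q \<in> set ?L" for q
    using that finite_pos[OF u, of m] by (auto simp: inv_word_def pos_def LS_def)
  ultimately show ?thesis by (simp add: restr_pos iv_def rev_map[symmetric] o_def cong: map_cong)
qed

lemma restr_split: "is_word G w \<Longrightarrow>
  restr m w = restr m (wr (\<lambda>q. q < c) w) @ restr m (wr (\<lambda>q. q = c) w) @ restr m (wr (\<lambda>q. c < q) w)"
proof -
  assume w: "is_word G w"
  let ?L = "sorted_list_of_set (pos m w)"
  have "?L = filter (\<lambda>q. q < c) ?L @ filter (\<lambda>q. q = c) ?L @ filter (\<lambda>q. c < q) ?L"
    by (rule split3) simp
  then have "restr m w = map (\<lambda>q. the (w q)) (filter (\<lambda>q. q < c) ?L @ filter (\<lambda>q. q = c) ?L @ filter (\<lambda>q. c < q) ?L)"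
    by (simp add: restr_pos)
  then show ?thesis by (simp add: restr_wr[OF w])
qed

lemma restr_lo: "is_word G w \<Longrightarrow> m0 \<le> m \<Longrightarrow> filter (\<lambda>l. fst l \<le> m0) (restr m w) = restr m0 w"
proof -
  assume w: "is_word G w" and mm: "m0 \<le> m"
  have "pos m0 w = {q \<in> pos m w. fst (the (w q)) \<le> m0}" using mm by (auto simp: pos_def LS_def)
  then have "sorted_list_of_set (pos m0 w) = filter (\<lambda>q. fst (the (w q)) \<le> m0) (sorted_list_of_set (pos m w))"
    using finite_pos[OF w, of m] by (simp add: slos_filter)
  then show ?thesis by (simp add: restr_pos filter_map o_def)
qed

end

context fam begin

abbreviation T where "T \<equiv> top_product G"
abbreviation cls where "cls \<equiv> word_class G"

lemma weq_refl[simp]: "word_equiv G u u" by (simp add: word_equiv_def)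
lemma weq_sym: "word_equiv G u v \<Longrightarrow> word_equiv G v u" by (simp add: word_equiv_def feq_sym)
lemma weq_trans: "word_equiv G u v \<Longrightarrow> word_equiv G v w \<Longrightarrow> word_equiv G u w"
  by (meson word_equiv_def feq_trans)
lemma weqI: "(\<And>m. restr m u = restr m v) \<Longrightarrow> word_equiv G u v" by (simp add: word_equiv_def)

lemma cls_self: "is_word G u \<Longrightarrow> u \<in> cls u" by (simp add: word_class_def)
lemma in_cls: "v \<in> cls u \<Longrightarrow> is_word G v \<and> word_equiv G u v" by (simp add: word_class_def)
lemma cls_eqI: "word_equiv G u v \<Longrightarrow> cls u = cls v"
  unfolding word_class_def using weq_trans weq_sym by blast
lemma cls_eqD: "cls u = cls v \<Longrightarrow> is_word G v \<Longrightarrow> word_equiv G u v"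
  using cls_self in_cls by blast

lemma carrier_T: "carrier T = cls ` {u. is_word G u}" by (simp add: top_product_def)
lemma one_T: "\<one>\<^bsub>T\<^esub> = cls (\<lambda>_. None)" by (simp add: top_product_def)

lemma weq_concat: "is_word G u \<Longrightarrow> is_word G v \<Longrightarrow> is_word G u' \<Longrightarrow> is_word G v' \<Longrightarrow>
  word_equiv G u u' \<Longrightarrow> word_equiv G v v' \<Longrightarrow> word_equiv G (concat_word u v) (concat_word u' v')"
  unfolding word_equiv_def by (simp add: restr_concat feq_app)

lemma mult_T: "is_word G u \<Longrightarrow> is_word G v \<Longrightarrow> cls u \<otimes>\<^bsub>T\<^esub> cls v = cls (concat_word u v)"
proof -
  assume u: "is_word G u" and v: "is_word G v"
  have su: "(SOME x. x \<in> cls u) \<in> cls u" using someI[of "\<lambda>x. x \<in> cls u" u, OF cls_self[OF u]] .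
  have sv: "(SOME x. x \<in> cls v) \<in> cls v" using someI[of "\<lambda>x. x \<in> cls v" v, OF cls_self[OF v]] .
  show ?thesis unfolding top_product_def apply simp
    apply (rule cls_eqI[OF weq_sym[OF weq_concat]])
    using in_cls[OF su] in_cls[OF sv] u v by auto
qed

lemma cls_carrier: "is_word G u \<Longrightarrow> cls u \<in> carrier T" by (simp add: carrier_T)

lemma carrier_TE: "C \<in> carrier T \<Longrightarrow> (\<And>u. is_word G u \<Longrightarrow> C = cls u \<Longrightarrow> P) \<Longrightarrow> P"
  by (auto simp: carrier_T)

lemma group_T: "group T"
proof (rule groupI)
  fix x y assume "x \<in> carrier T" "y \<in> carrier T"
  then show "x \<otimes>\<^bsub>T\<^esub> y \<in> carrier T"
    by (auto elim!: carrier_TE simp: mult_T is_word_concat cls_carrier)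
next
  show "\<one>\<^bsub>T\<^esub> \<in> carrier T" by (simp add: one_T cls_carrier)
next
  fix x y z assume "x \<in> carrier T" "y \<in> carrier T" "z \<in> carrier T"
  then obtain u v w where u: "is_word G u" "x = cls u" and v: "is_word G v" "y = cls v" and w: "is_word G w" "z = cls w"
    by (meson carrier_TE)
  have "cls (concat_word (concat_word u v) w) = cls (concat_word u (concat_word v w))"
    by (rule cls_eqI, rule weqI) (simp add: restr_concat is_word_concat u v w)
  then show "x \<otimes>\<^bsub>T\<^esub> y \<otimes>\<^bsub>T\<^esub> z = x \<otimes>\<^bsub>T\<^esub> (y \<otimes>\<^bsub>T\<^esub> z)"
    using u v w by (simp add: mult_T is_word_concat)
next
  fix x assume "x \<in> carrier T"
  then obtain u where u: "is_word G u" "x = cls u" by (meson carrier_TE)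
  have "cls (concat_word (\<lambda>_. None) u) = cls u"
    by (rule cls_eqI, rule weqI) (simp add: restr_concat u)
  then show "\<one>\<^bsub>T\<^esub> \<otimes>\<^bsub>T\<^esub> x = x" using u by (simp add: one_T mult_T)
next
  fix x assume "x \<in> carrier T"
  then obtain u where u: "is_word G u" "x = cls u" by (rule carrier_TE)
  have "cls (inv_word G u) \<otimes>\<^bsub>T\<^esub> x = \<one>\<^bsub>T\<^esub>"
    unfolding u(2) one_T mult_T[OF is_word_inv[OF u(1)] u(1)]
    by (rule cls_eqI) (simp add: word_equiv_def restr_concat is_word_inv u restr_inv inv_left valid_restr)
  then show "\<exists>y\<in>carrier T. y \<otimes>\<^bsub>T\<^esub> x = \<one>\<^bsub>T\<^esub>" using cls_carrier[OF is_word_inv[OF u(1)]] by blast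
qed

lemma inv_T: "is_word G u \<Longrightarrow> inv\<^bsub>T\<^esub> (cls u) = cls (inv_word G u)"
proof -
  assume u: "is_word G u"
  have "cls (inv_word G u) \<otimes>\<^bsub>T\<^esub> cls u = \<one>\<^bsub>T\<^esub>"
    unfolding one_T mult_T[OF is_word_inv[OF u] u]
    by (rule cls_eqI) (simp add: word_equiv_def restr_concat is_word_inv u restr_inv inv_left valid_restr)
  then show ?thesis using group.inv_equality[OF group_T] cls_carrier u is_word_inv by blast
qed

lemma pow_T: "is_word G u \<Longrightarrow> \<exists>w. is_word G w \<and> cls u [^]\<^bsub>T\<^esub> (k::nat) = cls w \<and> (\<forall>m. restr m w \<sim> pw k (restr m u))"
proof (induction k)
  case 0
  then show ?case by (intro exI[of _ "\<lambda>_. None"]) (simp add: one_T)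
next
  case (Suc k)
  then obtain w where w: "is_word G w" "cls u [^]\<^bsub>T\<^esub> k = cls w" "\<forall>m. restr m w \<sim> pw k (restr m u)" by blast
  have "cls u [^]\<^bsub>T\<^esub> Suc k = cls (concat_word w u)" using w Suc.prems by (simp add: mult_T)
  moreover have "restr m (concat_word w u) \<sim> pw (Suc k) (restr m u)" for m
    using w Suc.prems by (simp add: restr_concat pw_Suc2 feq_app)
  ultimately show ?case using is_word_concat[OF w(1) Suc.prems] by blast
qed

end

lemma (in group) normal_closure_normal:
  assumes S: "S \<subseteq> carrier G"
  shows "normal_closure G S \<lhd> G"
proof -
  have inv_solve_left': "inv x \<otimes> (x \<otimes> z) = z" if "x \<in> carrier G" "z \<in> carrier G" for x z
    using that by (simp add: m_assoc[symmetric])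
  let ?gens = "(\<Union>g \<in> carrier G. (\<lambda>h. g \<otimes> h \<otimes> inv g) ` S)"
  have gc: "?gens \<subseteq> carrier G" using S by (auto intro!: m_closed)
  have sub: "subgroup (generate G ?gens) G" by (rule generate_is_subgroup[OF gc])
  have conj_gens: "x \<otimes> h \<otimes> inv x \<in> ?gens" if x: "x \<in> carrier G" and h: "h \<in> ?gens" for x h
  proof -
    obtain g s where gs: "g \<in> carrier G" "s \<in> S" "h = g \<otimes> s \<otimes> inv g" using h by blast
    have sc: "s \<in> carrier G" using gs S by auto
    have "x \<otimes> h \<otimes> inv x = (x \<otimes> g) \<otimes> s \<otimes> inv (x \<otimes> g)"
      using x gs(1,3) sc by (simp add: inv_mult_group m_assoc)
    moreover have "x \<otimes> g \<in> carrier G" using x gs by simp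
    ultimately show ?thesis using gs(2) by blast
  qed
  have "x \<otimes> h \<otimes> inv x \<in> generate G ?gens" if x: "x \<in> carrier G" and h: "h \<in> generate G ?gens" for x h
    using h
  proof (induction rule: generate.induct)
    case one
    have "x \<otimes> \<one> \<otimes> inv x = \<one>" using x by simp
    then show ?case using generate.one by metis
  next
    case (incl h)
    then have "x \<otimes> h \<otimes> inv x \<in> ?gens" by (rule conj_gens[OF x])
    then show ?case by (rule generate.incl)
  next
    case (inv h)
    then have hc: "h \<in> carrier G" using gc by auto
    have "x \<otimes> inv h \<otimes> inv x = inv (x \<otimes> h \<otimes> inv x)"
      using x hc by (simp add: inv_mult_group m_assoc)
    then show ?case using generate.inv[OF conj_gens[OF x inv]] by simp
  next
    case (eng h1 h2)
    have c: "h1 \<in> carrier G" "h2 \<in> carrier G" using eng.hyps sub subgroup.subset by blast+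
    have "x \<otimes> (h1 \<otimes> h2) \<otimes> inv x = (x \<otimes> h1 \<otimes> inv x) \<otimes> (x \<otimes> h2 \<otimes> inv x)"
      using x c by (simp add: m_assoc inv_solve_left')
    then show ?case using generate.eng[OF eng.IH] by simp
  qed
  then have "\<forall>x\<in>carrier G. \<forall>h\<in>generate G ?gens. x \<otimes> h \<otimes> inv x \<in> generate G ?gens" by blast
  then show ?thesis unfolding normal_closure_def by (intro normal_inv_iff[THEN iffD2] conjI sub)
qed

context fam begin

abbreviation hi :: "nat \<Rightarrow> (nat \<times> 'a) list \<Rightarrow> (nat \<times> 'a) list" where "hi M xs \<equiv> filter (\<lambda>l. M < fst l) xs"
definition killed where "killed M u \<longleftrightarrow> (\<forall>m. hi M (restr m u) \<sim> [])"
definition KK where "KK = {C \<in> carrier T. \<exists>M u. u \<in> C \<and> killed M u}"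
abbreviation NN where "NN \<equiv> normal_closure T (free_product_sub G)"

lemma killed_equiv: "word_equiv G u v \<Longrightarrow> killed M u \<Longrightarrow> killed M v"
  unfolding killed_def word_equiv_def
  using feq_filter[of _ _ "\<lambda>n. M < n"] feq_sym feq_trans by metis

lemma hi_hi: "M \<le> M' \<Longrightarrow> hi M' (hi M xs) = hi M' xs"
  unfolding filter_filter by (rule filter_cong) auto

lemma killed_mono: "M \<le> M' \<Longrightarrow> killed M u \<Longrightarrow> killed M' u"
  unfolding killed_def
proof
  fix m assume MM: "M \<le> M'" and k: "\<forall>m. hi M (restr m u) \<sim> []"
  have "hi M' (hi M (restr m u)) \<sim> hi M' []" using feq_filter[OF spec[OF k, of m], of "\<lambda>n. M' < n"] by simp
  then show "hi M' (restr m u) \<sim> []" using hi_hi[OF MM] by simp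
qed

lemma KK_mem: "is_word G u \<Longrightarrow> killed M u \<Longrightarrow> cls u \<in> KK"
  unfolding KK_def using cls_carrier cls_self by blast

lemma KK_memD: "C \<in> KK \<Longrightarrow> \<exists>u M. is_word G u \<and> C = cls u \<and> killed M u"
proof -
  assume "C \<in> KK"
  then obtain M u w where "u \<in> C" "killed M u" "is_word G w" "C = cls w"
    unfolding KK_def by (auto elim: carrier_TE)
  then show ?thesis using in_cls[of u w] cls_eqI by metis
qed

lemma iv_triv: "valid x \<Longrightarrow> x \<sim> [] \<Longrightarrow> iv x \<sim> []"
proof -
  assume v: "valid x" and x: "x \<sim> []"
  have "iv x @ [] \<sim> iv x @ x" using feq_app[OF feq_refl feq_sym[OF x]] .
  then show ?thesis using inv_left[OF v] feq_trans by simp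
qed

lemma KK_subgroup: "subgroup KK T"
proof (rule group.subgroupI[OF group_T])
  show "KK \<subseteq> carrier T" by (auto simp: KK_def)
  have "killed 0 (\<lambda>_. None)" by (simp add: killed_def)
  then show "KK \<noteq> {}" using KK_mem[of "\<lambda>_. None"] by auto
next
  fix a assume "a \<in> KK"
  then obtain u M where u: "is_word G u" "a = cls u" "killed M u" using KK_memD by blast
  have "killed M (inv_word G u)"
    unfolding killed_def
    using u(3) by (simp add: restr_inv u(1) killed_def filter_iv[of "\<lambda>n. M < n"] iv_triv valid_filter valid_restr)
  then show "inv\<^bsub>T\<^esub> a \<in> KK" using u inv_T KK_mem is_word_inv by metis
next
  fix a b assume "a \<in> KK" "b \<in> KK"
  then obtain u M v M' where u: "is_word G u" "a = cls u" "killed M u" and v: "is_word G v" "b = cls v" "killed M' v"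
    using KK_memD by metis
  have "killed (max M M') u" "killed (max M M') v"
    using killed_mono[OF max.cobounded1 u(3)] killed_mono[OF max.cobounded2 v(3)] by auto
  then have "killed (max M M') (concat_word u v)"
    unfolding killed_def using u v by (simp add: restr_concat feq_app[of _ "[]" _ "[]", simplified])
  then show "a \<otimes>\<^bsub>T\<^esub> b \<in> KK" using u v by (simp add: mult_T KK_mem is_word_concat)
qed

lemma restr_letters: "is_word G w \<Longrightarrow> l \<in> set (restr m w) \<Longrightarrow> \<exists>q. w q = Some l \<and> fst l \<le> m"
  using finite_pos[of w m] by (fastforce simp: restr_pos pos_def LS_def)

lemma fin_bound:
  assumes "is_word G u" "finite {q. u q \<noteq> None}"
  shows "\<exists>M. \<forall>m. hi M (restr m u) = []"
proof -
  let ?F = "(\<lambda>q. fst (the (u q))) ` {q. u q \<noteq> None}"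
  have "finite ?F" using assms(2) by simp
  then obtain M where M: "\<forall>n\<in>?F. n \<le> M" using finite_nat_set_iff_bounded_le by blast
  have "hi M (restr m u) = []" for m
  proof -
    have "\<not> M < fst l" if l: "l \<in> set (restr m u)" for l
    proof -
      obtain q where q: "u q = Some l" using restr_letters[OF assms(1) l] by blast
      then have "fst (the (u q)) \<in> ?F" by (intro image_eqI[of _ _ q]) auto
      then show ?thesis using M q by force
    qed
    then show ?thesis by (simp add: filter_empty_conv)
  qed
  then show ?thesis by blast
qed

lemma gens_KK: "(\<Union>g \<in> carrier T. (\<lambda>h. g \<otimes>\<^bsub>T\<^esub> h \<otimes>\<^bsub>T\<^esub> inv\<^bsub>T\<^esub> g) ` free_product_sub G) \<subseteq> KK"
proof safe
  fix g f assume g: "g \<in> carrier T" and f: "f \<in> free_product_sub G"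
  obtain w where w: "is_word G w" "g = cls w" using g by (rule carrier_TE)
  obtain u where u: "u \<in> f" "finite {q. u q \<noteq> None}" "f \<in> carrier T"
    using f by (auto simp: free_product_sub_def)
  obtain u0 where "is_word G u0" "f = cls u0" using u(3) by (rule carrier_TE)
  then have uw: "is_word G u" "f = cls u" using u(1) in_cls cls_eqI by metis+
  obtain M where M: "\<forall>m. hi M (restr m u) = []" using fin_bound[OF uw(1) u(2)] by blast
  have "killed M (concat_word (concat_word w u) (inv_word G w))"
    unfolding killed_def
  proof
    fix m
    have e: "restr m (concat_word (concat_word w u) (inv_word G w)) = (restr m w @ restr m u) @ iv (restr m w)"
      by (simp add: restr_concat restr_inv is_word_concat is_word_inv w uw)
    have "hi M (restr m (concat_word (concat_word w u) (inv_word G w))) = hi M (restr m w) @ iv (hi M (restr m w))"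
      unfolding e using M filter_iv[of "\<lambda>n. M < n" "restr m w"] by simp
    then show "hi M (restr m (concat_word (concat_word w u) (inv_word G w))) \<sim> []"
      using inv_right[OF valid_filter[OF valid_restr[OF w(1)]]] by simp
  qed
  then show "g \<otimes>\<^bsub>T\<^esub> f \<otimes>\<^bsub>T\<^esub> inv\<^bsub>T\<^esub> g \<in> KK"
    using w uw by (simp add: inv_T mult_T is_word_concat is_word_inv KK_mem)
qed

lemma NN_KK: "NN \<subseteq> KK"
  unfolding normal_closure_def
  by (rule group.generate_subgroup_incl[OF group_T gens_KK KK_subgroup])

lemma S_carrier: "free_product_sub G \<subseteq> carrier T"
  by (auto simp: free_product_sub_def)

lemma NN_normal: "NN \<lhd> T"
  by (rule group.normal_closure_normal[OF group_T S_carrier])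

end

context fam begin

lemma NN_sub: "subgroup NN T"
  using NN_normal by (simp add: normal_def)

lemma conj_in_NN: "g \<in> carrier T \<Longrightarrow> f \<in> free_product_sub G \<Longrightarrow> g \<otimes>\<^bsub>T\<^esub> f \<otimes>\<^bsub>T\<^esub> inv\<^bsub>T\<^esub> g \<in> NN"
  unfolding normal_closure_def by (rule generate.incl) blast

lemma wr_wr_ext: "wr P (wr Q w) = wr (\<lambda>q. Q q \<and> P q) w"
  by (auto simp: wr_def)

lemma KK_NN_word: "is_word G w \<Longrightarrow> killed M w \<Longrightarrow> cls w \<in> NN"
proof (induction "card (pos M w)" arbitrary: w rule: less_induct)
  case less
  note w = less.prems(1)
  interpret TG: group T by (rule group_T)
  show ?case
  proof (cases "pos M w = {}")
    case True
    have "hi M (restr m w) = restr m w" for m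
    proof -
      have "M < fst l" if l: "l \<in> set (restr m w)" for l
      proof (rule ccontr)
        assume "\<not> M < fst l"
        obtain q where "w q = Some l" using restr_letters[OF w l] by blast
        then have "q \<in> pos M w" using \<open>\<not> M < fst l\<close> by (cases l) (auto simp: pos_def LS_def)
        then show False using True by simp
      qed
      then show ?thesis by (simp add: filter_id_conv)
    qed
    then have "word_equiv G w (\<lambda>_. None)" using less.prems(2) by (simp add: killed_def word_equiv_def)
    then have "cls w = \<one>\<^bsub>T\<^esub>" by (simp add: one_T cls_eqI)
    then show ?thesis using subgroup.one_closed[OF NN_sub] by simp
  next
    case False
    then obtain q0 where q0: "q0 \<in> pos M w" by blast
    define u where "u = wr (\<lambda>q. q < q0) w"
    define c where "c = wr (\<lambda>q. q = q0) w"
    define w' where "w' = wr (\<lambda>q. q0 < q) w"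
    define x where "x = wr (\<lambda>q. q \<noteq> q0) w"
    have wu: "is_word G u" "is_word G c" "is_word G w'" "is_word G x"
      unfolding u_def c_def w'_def x_def using is_word_wr[OF w] by auto
    have sw: "restr m w = restr m u @ restr m c @ restr m w'" for m
      unfolding u_def c_def w'_def by (rule restr_split[OF w])
    have "restr m x = restr m (wr (\<lambda>q. q < q0) x) @ restr m (wr (\<lambda>q. q = q0) x) @ restr m (wr (\<lambda>q. q0 < q) x)" for m
      by (rule restr_split[OF wu(4)])
    moreover have "wr (\<lambda>q. q < q0) x = u" "wr (\<lambda>q. q = q0) x = (\<lambda>_. None)" "wr (\<lambda>q. q0 < q) x = w'"
      unfolding u_def x_def w'_def by (auto simp: wr_def)
    ultimately have sx: "restr m x = restr m u @ restr m w'" for m by simp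
    have hc: "hi M (restr m c) = []" for m
    proof -
      have "\<not> M < fst l" if l: "l \<in> set (restr m c)" for l
      proof -
        obtain q where q: "c q = Some l" using restr_letters[OF wu(2) l] by blast
        then have "q = q0" "w q0 = Some l" by (auto simp: c_def wr_def split: if_splits)
        then show ?thesis using q0 by (auto simp: pos_def LS_def)
      qed
      then show ?thesis by (simp add: filter_empty_conv)
    qed
    have kx: "killed M x" using less.prems(2) unfolding killed_def by (simp add: sx sw hc)
    have "pos M x = pos M w - {q0}" by (auto simp: x_def pos_wr)
    then have "card (pos M x) < card (pos M w)"
      using card_Diff1_less[OF finite_pos[OF w] q0] by simp
    then have xN: "cls x \<in> NN" using less.hyps wu(4) kx by blast
    have cS: "cls c \<in> free_product_sub G"
    proof -
      have "{q. c q \<noteq> None} \<subseteq> {q0}" by (auto simp: c_def wr_def)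
      then have "finite {q. c q \<noteq> None}" using finite_subset by blast
      then show ?thesis unfolding free_product_sub_def using cls_carrier[OF wu(2)] cls_self[OF wu(2)] by blast
    qed
    have cN: "cls u \<otimes>\<^bsub>T\<^esub> cls c \<otimes>\<^bsub>T\<^esub> inv\<^bsub>T\<^esub> (cls u) \<in> NN"
      by (rule conj_in_NN[OF cls_carrier[OF wu(1)] cS])
    have "cls w = cls u \<otimes>\<^bsub>T\<^esub> cls c \<otimes>\<^bsub>T\<^esub> cls w'"
      using wu by (simp add: mult_T is_word_concat) (rule cls_eqI, rule weqI, simp add: restr_concat is_word_concat wu sw)
    also have "\<dots> = (cls u \<otimes>\<^bsub>T\<^esub> cls c \<otimes>\<^bsub>T\<^esub> inv\<^bsub>T\<^esub> (cls u)) \<otimes>\<^bsub>T\<^esub> (cls u \<otimes>\<^bsub>T\<^esub> cls w')"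
    proof -
      have cu: "cls u \<in> carrier T" "cls c \<in> carrier T" "cls w' \<in> carrier T"
        using cls_carrier[OF wu(1)] cls_carrier[OF wu(2)] cls_carrier[OF wu(3)] by auto
      have "inv\<^bsub>T\<^esub> (cls u) \<otimes>\<^bsub>T\<^esub> (cls u \<otimes>\<^bsub>T\<^esub> cls w') = cls w'"
        using cu by (simp add: TG.m_assoc[symmetric])
      then show ?thesis using cu by (simp add: TG.m_assoc)
    qed
    also have "cls u \<otimes>\<^bsub>T\<^esub> cls w' = cls x"
      using wu by (simp add: mult_T) (rule cls_eqI, rule weqI, simp add: restr_concat wu sx)
    finally show ?thesis using cN xN subgroup.m_closed[OF NN_sub] by simp
  qed
qed

lemma KK_NN: "KK \<subseteq> NN"
  using KK_memD KK_NN_word by blast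

lemma restr_hi_small: "is_word G w \<Longrightarrow> m \<le> m0 \<Longrightarrow> hi m0 (restr m w) = []"
  using restr_fst by (fastforce simp: filter_empty_conv)

lemma torsion_KK:
  assumes w: "is_word G w" and k: "0 < (k::nat)" and p: "cls w [^]\<^bsub>T\<^esub> k \<in> KK"
  shows "cls w \<in> KK"
proof -
  obtain wk where wk: "is_word G wk" "cls w [^]\<^bsub>T\<^esub> k = cls wk" "\<forall>m. restr m wk \<sim> pw k (restr m w)"
    using pow_T[OF w] by blast
  obtain u M where u: "is_word G u" "cls wk = cls u" "killed M u" using KK_memD p wk(2) by metis
  have "killed M wk" using killed_equiv[OF weq_sym[OF cls_eqD[OF u(2) u(1)]] u(3)] .
  then have px: "pw k (hi M (restr m w)) \<sim> []" for m
    using feq_filter[OF feq_sym[OF spec[OF wk(3), of m]], of "\<lambda>n. M < n"] feq_trans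
    unfolding killed_def by (metis filter_pw)
  show ?thesis
  proof (cases "\<forall>m. hi M (restr m w) \<sim> []")
    case True
    then show ?thesis using KK_mem[OF w] killed_def by blast
  next
    case False
    then obtain m0 where m0: "\<not> hi M (restr m0 w) \<sim> []" by blast
    have Mm0: "M \<le> m0"
    proof (rule ccontr)
      assume "\<not> M \<le> m0"
      then have "hi M (restr m0 w) = []" using restr_hi_small[OF w, of m0 M] by simp
      then show False using m0 by simp
    qed
    have "killed m0 w" unfolding killed_def
    proof
      fix m
      show "hi m0 (restr m w) \<sim> []"
      proof (cases "m \<le> m0")
        case True then show ?thesis using restr_hi_small[OF w True] by simp
      next
        case False
        have "filter (\<lambda>l. fst l \<le> m0) (hi M (restr m w)) \<sim> [] \<or> filter (\<lambda>l. \<not> fst l \<le> m0) (hi M (restr m w)) \<sim> []"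
          by (rule proj_tors[OF valid_filter[OF valid_restr[OF w]] k px])
        moreover have "filter (\<lambda>l. fst l \<le> m0) (hi M (restr m w)) = hi M (restr m0 w)"
        proof -
          have "filter (\<lambda>l. fst l \<le> m0) (hi M (restr m w)) = hi M (filter (\<lambda>l. fst l \<le> m0) (restr m w))"
            by (simp add: filter_filter conj_commute)
          then show ?thesis using restr_lo[OF w, of m0 m] False by simp
        qed
        moreover have "filter (\<lambda>l. \<not> fst l \<le> m0) (hi M (restr m w)) = hi m0 (restr m w)"
          unfolding filter_filter using Mm0 by (intro filter_cong) auto
        ultimately show ?thesis using m0 by auto
      qed
    qed
    then show ?thesis using KK_mem[OF w] by blast
  qed
qed

theorem main: "torsion_free (archipelago G)"
proof -
  interpret TG: group T by (rule group_T)
  have gq: "group (T Mod NN)" by (rule normal.factorgroup_is_group[OF NN_normal])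
  show ?thesis unfolding torsion_free_def archipelago_def
  proof (intro ballI allI impI)
    fix Y and k :: nat
    assume Y: "Y \<in> carrier (T Mod NN)" and kk: "0 < k \<and> Y [^]\<^bsub>T Mod NN\<^esub> k = \<one>\<^bsub>T Mod NN\<^esub>"
    obtain a where a: "a \<in> carrier T" "Y = NN #>\<^bsub>T\<^esub> a"
      using Y by (auto simp: FactGroup_def RCOSETS_def)
    have "Y [^]\<^bsub>T Mod NN\<^esub> k = NN #>\<^bsub>T\<^esub> (a [^]\<^bsub>T\<^esub> k)"
      using hom_nat_pow[OF normal.r_coset_hom_Mod[OF NN_normal] a(1) group_T gq] a(2) by simp
    then have "NN #>\<^bsub>T\<^esub> (a [^]\<^bsub>T\<^esub> k) = NN" using kk by (simp add: FactGroup_def)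
    then have "a [^]\<^bsub>T\<^esub> k \<in> NN" using TG.coset_join1 NN_sub a(1) by blast
    then have pK: "a [^]\<^bsub>T\<^esub> k \<in> KK" using NN_KK by blast
    obtain w where w: "is_word G w" "a = cls w" using a(1) by (rule carrier_TE)
    have "a \<in> KK" using torsion_KK[OF w(1)] kk pK w(2) by blast
    then have "a \<in> NN" using KK_NN by blast
    then have "NN #>\<^bsub>T\<^esub> a = NN" using TG.coset_join2 NN_sub a(1) by blast
    then show "Y = \<one>\<^bsub>T Mod NN\<^esub>" using a(2) by (simp add: FactGroup_def)
  qed
qed

end

theorem proposition8:
  fixes G :: "nat \<Rightarrow> ('a, 'b) monoid_scheme"
  assumes "\<And>n. group (G n)"
  shows "torsion_free (archipelago G)"
proof -
  have "fam G" unfolding fam_def using assms by blast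
  then interpret fam G .
  show ?thesis by (rule main)
qed


end
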